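(* For every $\alpha\in(0,\tfrac12)$ there is an online algorithm for non-clairvoyant dynamic bin packing whose total migrated size is at most a $\frac{\alpha}{1-2\alpha}$-fraction of the total size of the items, and which at every time $t$ has at most $\frac{1}{\alpha}\mathrm{OPT}_t+1$ open bins.
   Context: Dynamic bin packing: bins have capacity $1$; items arrive online at times $a_i\ge0$ with size $s_i\in[0,1]$ and duration $d_i>0$ (only the size is revealed at arrival), present during $[a_i,a_i+d_i)$. Each item is placed on arrival into an open bin with enough remaining capacity or a new bin; a migration moves an already placed item to another bin. In the size-cost model, each migration of item $i$ costs $s_i$; the total migrated size is the sum of these costs, and the total size of the items is $\sum_i s_i$. A bin is open while nonempty. $\mathrm{OPT}_t$ is the minimum number of unit bins needed to pack the items present at time $t$. *)

theory Defs
  imports Complex_Main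
begin

text \<open>An instance with n items: item i < n arrives at time a i, has size s i and
  duration d i; it is present during the interval [a i, a i + d i).\<close>

definition valid_instance :: "nat \<Rightarrow> (nat \<Rightarrow> real) \<Rightarrow> (nat \<Rightarrow> real) \<Rightarrow> (nat \<Rightarrow> real) \<Rightarrow> bool" where
  "valid_instance n a s d \<longleftrightarrow> (\<forall>i<n. 0 \<le> a i \<and> 0 \<le> s i \<and> s i \<le> 1 \<and> 0 < d i)"

definition present :: "nat \<Rightarrow> (nat \<Rightarrow> real) \<Rightarrow> (nat \<Rightarrow> real) \<Rightarrow> real \<Rightarrow> nat set" where
  "present n a d t = {i. i < n \<and> a i \<le> t \<and> t < a i + d i}"

text \<open>Information revealed to a non-clairvoyant online algorithm by time t:
  for every item that has arrived, its arrival time and size, and its departure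
  time if it has already departed. Nothing is known about future items or
  about durations of items still present.\<close>

type_synonym view = "nat \<Rightarrow> (real \<times> real \<times> real option) option"

definition view_at :: "nat \<Rightarrow> (nat \<Rightarrow> real) \<Rightarrow> (nat \<Rightarrow> real) \<Rightarrow> (nat \<Rightarrow> real) \<Rightarrow> real \<Rightarrow> view" where
  "view_at n a s d t = (\<lambda>i. if i < n \<and> a i \<le> t
      then Some (a i, s i, if a i + d i \<le> t then Some (a i + d i) else None)
      else None)"

type_synonym algorithm = "view \<Rightarrow> nat \<Rightarrow> nat"

definition alg_packing :: "algorithm \<Rightarrow> nat \<Rightarrow> (nat \<Rightarrow> real) \<Rightarrow> (nat \<Rightarrow> real) \<Rightarrow> (nat \<Rightarrow> real) \<Rightarrow> real \<Rightarrow> nat \<Rightarrow> nat" where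
  "alg_packing A n a s d t = A (view_at n a s d t)"

definition feasible_at :: "algorithm \<Rightarrow> nat \<Rightarrow> (nat \<Rightarrow> real) \<Rightarrow> (nat \<Rightarrow> real) \<Rightarrow> (nat \<Rightarrow> real) \<Rightarrow> real \<Rightarrow> bool" where
  "feasible_at A n a s d t \<longleftrightarrow>
     (\<forall>b. (\<Sum>i\<in>{i\<in>present n a d t. alg_packing A n a s d t i = b}. s i) \<le> 1)"

definition open_bins :: "algorithm \<Rightarrow> nat \<Rightarrow> (nat \<Rightarrow> real) \<Rightarrow> (nat \<Rightarrow> real) \<Rightarrow> (nat \<Rightarrow> real) \<Rightarrow> real \<Rightarrow> nat" where
  "open_bins A n a s d t = card (alg_packing A n a s d t ` present n a d t)"

definition OPT :: "nat \<Rightarrow> (nat \<Rightarrow> real) \<Rightarrow> (nat \<Rightarrow> real) \<Rightarrow> (nat \<Rightarrow> real) \<Rightarrow> real \<Rightarrow> nat" where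
  "OPT n a s d t = (LEAST k. \<exists>f :: nat \<Rightarrow> nat.
      (\<forall>i\<in>present n a d t. f i < k) \<and>
      (\<forall>b<k. (\<Sum>i\<in>{i\<in>present n a d t. f i = b}. s i) \<le> 1))"

definition event_times :: "nat \<Rightarrow> (nat \<Rightarrow> real) \<Rightarrow> (nat \<Rightarrow> real) \<Rightarrow> real set" where
  "event_times n a d = a ` {..<n} \<union> (\<lambda>i. a i + d i) ` {..<n}"

text \<open>The packing only changes at event times; item i migrates at an event time t
  strictly inside its lifetime if its bin differs from its bin at the previous
  event time.\<close>

definition migrations :: "algorithm \<Rightarrow> nat \<Rightarrow> (nat \<Rightarrow> real) \<Rightarrow> (nat \<Rightarrow> real) \<Rightarrow> (nat \<Rightarrow> real) \<Rightarrow> nat \<Rightarrow> nat" where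
  "migrations A n a s d i = card {t \<in> event_times n a d. a i < t \<and> t < a i + d i \<and>
      alg_packing A n a s d t i \<noteq>
      alg_packing A n a s d (Max {e \<in> event_times n a d. e < t}) i}"

definition migrated_size :: "algorithm \<Rightarrow> nat \<Rightarrow> (nat \<Rightarrow> real) \<Rightarrow> (nat \<Rightarrow> real) \<Rightarrow> (nat \<Rightarrow> real) \<Rightarrow> real" where
  "migrated_size A n a s d = (\<Sum>i<n. s i * real (migrations A n a s d i))"

end

theory Submission
  imports Defs "HOL-Library.Product_Lexorder"
begin


record bst = Arr :: "nat set" Dep :: "nat set" sz :: "nat \<Rightarrow> real"
  lab :: "nat \<Rightarrow> nat" mv :: "nat \<Rightarrow> nat" ob :: nat cnt :: nat

definition PP :: "bst \<Rightarrow> nat set" where "PP s = Arr s - Dep s"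
definition load :: "bst \<Rightarrow> nat \<Rightarrow> real" where
  "load s B = (\<Sum>j\<in>{j\<in>PP s. lab s j = B}. sz s j)"

lemma fold_filter_split:
  assumes "sorted xs" "\<And>x y. x \<le> y \<Longrightarrow> Q y \<Longrightarrow> Q x" "\<And>x. Q x \<Longrightarrow> P x"
  shows "filter P xs = filter Q xs @ filter (\<lambda>x. P x \<and> \<not> Q x) xs"
  using assms(1)
proof (induction xs)
  case Nil then show ?case by simp
next
  case (Cons x xs)
  show ?case
  proof (cases "Q x")
    case True then show ?thesis using Cons assms(3) by auto
  next
    case False
    then have "\<forall>y\<in>set xs. \<not> Q y" using Cons.prems assms(2) by auto
    then show ?thesis using False by (auto intro!: filter_cong)
  qed
qed

lemma sorted_list_of_set_filter:
  fixes A :: "'a::linorder set"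
  assumes "finite A"
  shows "sorted_list_of_set {x\<in>A. P x} = filter P (sorted_list_of_set A)"
proof -
  have "sorted_wrt (<) (filter P (sorted_list_of_set A))"
    using sorted_wrt_filter strict_sorted_list_of_set by blast
  moreover have "set (filter P (sorted_list_of_set A)) = {x\<in>A. P x}" using assms by auto
  moreover have "length (filter P (sorted_list_of_set A)) = card {x\<in>A. P x}"
    by (metis calculation(2) distinct_card distinct_filter distinct_sorted_list_of_set)
  ultimately show ?thesis using assms
    by (subst sorted_list_of_set_unique[symmetric]) auto
qed

definition cls :: "bst \<Rightarrow> nat set" where
  "cls s = {B \<in> lab s ` PP s. even B \<and> B \<noteq> ob s}"
definition Mv :: "bst \<Rightarrow> real" where "Mv s = (\<Sum>i\<in>Arr s. sz s i * real (mv s i))"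
definition Dsz :: "bst \<Rightarrow> real" where "Dsz s = (\<Sum>i\<in>Arr s \<inter> Dep s. sz s i)"
definition remove :: "nat \<Rightarrow> bst \<Rightarrow> bst" where "remove i s = s\<lparr>Dep := insert i (Dep s)\<rparr>"

lemma load_cong:
  assumes "PP s = PP t" "\<And>j. j \<in> PP s \<Longrightarrow> lab s j = lab t j" "\<And>j. j \<in> PP s \<Longrightarrow> sz s j = sz t j"
  shows "load s B = load t B"
  unfolding load_def using assms by (intro sum.cong) auto

locale alg =
  fixes \<alpha> :: real
  assumes apos: "0 < \<alpha>" and ahalf: "\<alpha> < 1/2"
begin

definition cc :: real where "cc = \<alpha> / (1 - 2 * \<alpha>)"
definition hh :: "real \<Rightarrow> real" where "hh l = cc * max 0 (1 - \<alpha> - l)"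
definition Phi :: "bst \<Rightarrow> real" where "Phi s = (\<Sum>B\<in>cls s. hh (load s B))"

lemma cc_pos: "0 < cc" using apos ahalf unfolding cc_def by auto
lemma hh_nonneg: "0 \<le> hh l" using cc_pos unfolding hh_def by auto
lemma hh_zero: "1 - \<alpha> \<le> l \<Longrightarrow> hh l = 0" unfolding hh_def by auto
lemma hh_lip: "0 \<le> y \<Longrightarrow> hh (l - y) \<le> hh l + cc * y"
proof -
  assume y: "0 \<le> y"
  have "max 0 (1 - \<alpha> - (l - y)) \<le> max 0 (1 - \<alpha> - l) + y" using y by (auto simp: max_def)
  then have "cc * max 0 (1 - \<alpha> - (l - y)) \<le> cc * (max 0 (1 - \<alpha> - l) + y)"
    using cc_pos by (intro mult_left_mono) auto
  then show ?thesis unfolding hh_def by (simp add: algebra_simps)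
qed
lemma hh_small: assumes "0 \<le> m" "m < \<alpha>" shows "m \<le> hh m"
proof -
  have h: "hh m = cc * (1 - \<alpha> - m)" using assms ahalf unfolding hh_def by auto
  have "1 - 2*\<alpha> > 0" using ahalf by auto
  have "m * (1 - 2*\<alpha>) \<le> \<alpha> * (1 - \<alpha> - m)"
  proof -
    have "m * (1 - 2*\<alpha>) + \<alpha> * m = m * (1 - \<alpha>)" by (simp add: algebra_simps)
    also have "\<dots> \<le> \<alpha> * (1 - \<alpha>)" using assms ahalf by (intro mult_right_mono) auto
    finally show ?thesis by (simp add: algebra_simps)
  qed
  then have "m \<le> \<alpha> * (1 - \<alpha> - m) / (1 - 2*\<alpha>)" using \<open>1 - 2*\<alpha> > 0\<close>
    by (simp add: pos_le_divide_eq)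
  then show ?thesis using h unfolding cc_def by simp
qed

lemma Phi_nonneg: "0 \<le> Phi s" unfolding Phi_def by (intro sum_nonneg hh_nonneg)

definition dissolve :: "nat \<Rightarrow> bst \<Rightarrow> bst" where
  "dissolve B s = (if even B \<and> B \<noteq> ob s \<and> load s B < \<alpha> then
     (if load s (ob s) + load s B \<le> 1 then
        s\<lparr>lab := (\<lambda>j. if j \<in> PP s \<and> lab s j = B then ob s else lab s j),
           mv := (\<lambda>j. if j \<in> PP s \<and> lab s j = B then Suc (mv s j) else mv s j)\<rparr>
      else s\<lparr>ob := B\<rparr>)
   else s)"

definition depart :: "nat \<Rightarrow> bst \<Rightarrow> bst" where
  "depart i s = (if i \<in> PP s then dissolve (lab s i) (remove i s) else remove i s)"

definition arrive :: "nat \<Rightarrow> real \<Rightarrow> bst \<Rightarrow> bst" where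
  "arrive i x s = (if i \<in> Arr s then s
     else if i \<in> Dep s then s\<lparr>Arr := insert i (Arr s), sz := (sz s)(i := x)\<rparr>
     else if \<alpha> \<le> x then s\<lparr>Arr := insert i (Arr s), sz := (sz s)(i := x), lab := (lab s)(i := 2*i+1)\<rparr>
     else if load s (ob s) + x \<le> 1 then
       s\<lparr>Arr := insert i (Arr s), sz := (sz s)(i := x), lab := (lab s)(i := ob s)\<rparr>
     else s\<lparr>Arr := insert i (Arr s), sz := (sz s)(i := x), lab := (lab s)(i := 2 * cnt s),
            ob := 2 * cnt s, cnt := Suc (cnt s)\<rparr>)"

definition step :: "real \<times> nat \<times> nat \<times> real \<Rightarrow> bst \<Rightarrow> bst" where
  "step e = (case e of (t, k, i, x) \<Rightarrow> if k = 0 then depart i else arrive i x)"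

definition invA :: "bst \<Rightarrow> bool" where
  "invA s \<longleftrightarrow> finite (Arr s) \<and> (\<forall>i\<in>Arr s. 0 \<le> sz s i \<and> sz s i \<le> 1) \<and> (\<forall>i. i \<notin> Arr s \<longrightarrow> mv s i = 0)
   \<and> even (ob s) \<and> ob s < 2 * cnt s \<and> (\<forall>j\<in>PP s. even (lab s j) \<longrightarrow> lab s j < 2 * cnt s)
   \<and> (\<forall>j\<in>PP s. odd (lab s j) \<longrightarrow> lab s j = 2*j+1 \<and> \<alpha> \<le> sz s j)
   \<and> (\<forall>B. load s B \<le> 1) \<and> Mv s + Phi s \<le> cc * Dsz s"

definition I8 :: "bst \<Rightarrow> bool" where
  "I8 s \<longleftrightarrow> (\<forall>B\<in>lab s ` PP s. B \<noteq> ob s \<longrightarrow> \<alpha> \<le> load s B)"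

definition inv :: "bst \<Rightarrow> bool" where "inv s \<longleftrightarrow> invA s \<and> I8 s"

lemma load_nonneg: "invA s \<Longrightarrow> 0 \<le> load s B"
  unfolding load_def invA_def PP_def by (intro sum_nonneg) auto

lemma finite_PP: "invA s \<Longrightarrow> finite (PP s)"
  unfolding invA_def PP_def by auto

end


context alg
begin

lemma remove_simps[simp]: "Arr (remove i s) = Arr s" "Dep (remove i s) = insert i (Dep s)"
  "sz (remove i s) = sz s" "lab (remove i s) = lab s" "mv (remove i s) = mv s"
  "ob (remove i s) = ob s" "cnt (remove i s) = cnt s"
  unfolding remove_def by simp_all

lemma PP_remove: "PP (remove i s) = PP s - {i}" unfolding PP_def by auto

lemma load_remove:
  assumes "invA s" "i \<in> PP s"
  shows "load (remove i s) B = load s B - (if lab s i = B then sz s i else 0)"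
proof -
  have fin: "finite {j\<in>PP s. lab s j = B}" using finite_PP[OF assms(1)] by auto
  have eq: "{j\<in>PP (remove i s). lab s j = B} = {j\<in>PP s. lab s j = B} - {i}"
    unfolding PP_remove by auto
  show ?thesis
  proof (cases "lab s i = B")
    case True
    then have "i \<in> {j\<in>PP s. lab s j = B}" using assms(2) by auto
    then show ?thesis unfolding load_def remove_simps eq using True fin
      by (simp add: sum_diff1)
  next
    case False
    then have "{j\<in>PP s. lab s j = B} - {i} = {j\<in>PP s. lab s j = B}" by auto
    then show ?thesis unfolding load_def remove_simps eq using False by simp
  qed
qed

lemma sz_nonneg_PP: "invA s \<Longrightarrow> j \<in> PP s \<Longrightarrow> 0 \<le> sz s j"
  unfolding invA_def PP_def by auto

lemma finite_cls: "invA s \<Longrightarrow> finite (cls s)"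
  unfolding cls_def using finite_PP by auto

lemma invA_remove:
  assumes inv: "invA s" and i: "i \<in> PP s"
  shows "invA (remove i s)"
    and "\<forall>B\<in>lab s ` PP (remove i s). B \<noteq> ob s \<longrightarrow> B \<noteq> lab s i \<longrightarrow> I8 s \<longrightarrow> \<alpha> \<le> load (remove i s) B"
proof -
  let ?r = "remove i s"
  have szi: "0 \<le> sz s i" using sz_nonneg_PP[OF inv i] .
  have ld: "load ?r B \<le> load s B" for B using load_remove[OF inv i, of B] szi by auto
  have iA: "i \<in> Arr s" "i \<notin> Dep s" using i unfolding PP_def by auto
  have finA: "finite (Arr s)" using inv unfolding invA_def by auto
  have Dsz: "Dsz ?r = Dsz s + sz s i"
  proof -
    have "Arr ?r \<inter> Dep ?r = insert i (Arr s \<inter> Dep s)" using iA by auto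
    moreover have "i \<notin> Arr s \<inter> Dep s" using iA by auto
    ultimately show ?thesis unfolding Dsz_def using finA by simp
  qed
  have Mv: "Mv ?r = Mv s" unfolding Mv_def by simp
  have clsub: "cls ?r \<subseteq> cls s" unfolding cls_def PP_remove by auto
  have "Phi ?r \<le> (\<Sum>B\<in>cls ?r. hh (load s B) + (if B = lab s i then cc * sz s i else 0))"
    unfolding Phi_def
  proof (intro sum_mono)
    fix B
    show "hh (load ?r B) \<le> hh (load s B) + (if B = lab s i then cc * sz s i else 0)"
      using load_remove[OF inv i, of B] hh_lip[OF szi, of "load s B"] by auto
  qed
  also have "\<dots> = (\<Sum>B\<in>cls ?r. hh (load s B)) + (if lab s i \<in> cls ?r then cc * sz s i else 0)"
  proof -
    have "finite (cls ?r)" using finite_cls[OF inv] clsub finite_subset by auto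
    then show ?thesis by (simp add: sum.distrib sum.delta)
  qed
  also have "\<dots> \<le> Phi s + cc * sz s i"
  proof -
    have "(\<Sum>B\<in>cls ?r. hh (load s B)) \<le> Phi s"
      unfolding Phi_def using finite_cls[OF inv] clsub by (intro sum_mono2) (auto intro: hh_nonneg)
    moreover have "(if lab s i \<in> cls ?r then cc * sz s i else 0) \<le> cc * sz s i"
      using cc_pos szi by auto
    ultimately show ?thesis by linarith
  qed
  finally have Phi: "Phi ?r \<le> Phi s + cc * sz s i" .
  show "invA ?r"
    using inv unfolding invA_def
  proof (intro conjI)
    show "Mv ?r + Phi ?r \<le> cc * Dsz ?r" using inv Phi unfolding Mv Dsz invA_def
      by (simp add: algebra_simps)
    show "\<forall>B. load ?r B \<le> 1" using inv ld unfolding invA_def by (meson order_trans)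
  qed (auto simp: PP_remove)
  show "\<forall>B\<in>lab s ` PP (remove i s). B \<noteq> ob s \<longrightarrow> B \<noteq> lab s i \<longrightarrow> I8 s \<longrightarrow> \<alpha> \<le> load (remove i s) B"
    using load_remove[OF inv i] unfolding I8_def PP_remove by auto
qed

end


context alg
begin

lemma inv_dissolve:
  assumes inv: "invA s"
    and h8: "\<forall>B\<in>lab s ` PP s. B \<noteq> ob s \<longrightarrow> B \<noteq> B0 \<longrightarrow> \<alpha> \<le> load s B"
    and hev: "even B0 \<Longrightarrow> B0 < 2 * cnt s"
    and hodd: "odd B0 \<Longrightarrow> B0 \<notin> lab s ` PP s"
  shows "inv (dissolve B0 s)"
proof -
  have finA: "finite (Arr s)" using inv unfolding invA_def by auto
  have PPA: "PP s \<subseteq> Arr s" unfolding PP_def by auto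
  have finP: "finite (PP s)" using finite_PP[OF inv] .
  consider (no) "\<not> (even B0 \<and> B0 \<noteq> ob s \<and> load s B0 < \<alpha>)"
    | (fit) "even B0" "B0 \<noteq> ob s" "load s B0 < \<alpha>" "load s (ob s) + load s B0 \<le> 1"
    | (nofit) "even B0" "B0 \<noteq> ob s" "load s B0 < \<alpha>" "\<not> load s (ob s) + load s B0 \<le> 1"
    by blast
  then show ?thesis
  proof cases
    case no
    then have d: "dissolve B0 s = s" unfolding dissolve_def by auto
    have "I8 s" unfolding I8_def
    proof (intro ballI impI)
      fix B assume B: "B \<in> lab s ` PP s" "B \<noteq> ob s"
      show "\<alpha> \<le> load s B"
      proof (cases "B = B0")
        case True
        then have "even B0" using hodd B by auto
        then show ?thesis using no B True by auto
      qed (use h8 B in auto)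
    qed
    then show ?thesis unfolding d inv_def using inv by auto
  next
    case fit
    define R where "R j \<longleftrightarrow> j \<in> PP s \<and> lab s j = B0" for j
    define s2 where "s2 = s\<lparr>lab := (\<lambda>j. if R j then ob s else lab s j),
           mv := (\<lambda>j. if R j then Suc (mv s j) else mv s j)\<rparr>"
    have d: "dissolve B0 s = s2" unfolding dissolve_def s2_def R_def using fit by auto
    have P2: "PP s2 = PP s" unfolding s2_def PP_def by simp
    have lab2: "lab s2 j = (if R j then ob s else lab s j)" for j unfolding s2_def by simp
    have ld2: "load s2 B = (if B = B0 then 0 else if B = ob s then load s (ob s) + load s B0 else load s B)" for B
    proof -
      have L: "load s2 B = (\<Sum>j\<in>{j\<in>PP s. lab s2 j = B}. sz s j)"
        unfolding load_def P2 by (simp add: s2_def)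
      show ?thesis
      proof (cases "B = B0")
        case True
        have E: "{j\<in>PP s. lab s2 j = B} = {}" using fit(2) True unfolding lab2 R_def by auto
        have "load s2 B = 0" unfolding L E by simp
        then show ?thesis using True by simp
      next
        case F: False
        show ?thesis
        proof (cases "B = ob s")
          case True
          have "{j\<in>PP s. lab s2 j = B} = {j\<in>PP s. lab s j = ob s} \<union> {j\<in>PP s. lab s j = B0}"
            using True unfolding lab2 R_def by auto
          moreover have "(\<Sum>j\<in>{j\<in>PP s. lab s j = ob s} \<union> {j\<in>PP s. lab s j = B0}. sz s j)
              = load s (ob s) + load s B0"
            unfolding load_def using finP fit(2) by (intro sum.union_disjoint) auto
          ultimately have "load s2 B = load s (ob s) + load s B0" unfolding L by simp
          then show ?thesis using F True by simp
        next
          case False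
          have E: "{j\<in>PP s. lab s2 j = B} = {j\<in>PP s. lab s j = B}"
            using F False unfolding lab2 R_def by auto
          have "load s2 B = (\<Sum>j\<in>{j\<in>PP s. lab s j = B}. sz s j)" using L unfolding E .
          then have "load s2 B = load s B" by (simp only: load_def[of s])
          then show ?thesis using F False by simp
        qed
      qed
    qed
    have Mv2: "Mv s2 = Mv s + load s B0"
    proof -
      have "Mv s2 = (\<Sum>i\<in>Arr s. sz s i * real (mv s i) + (if R i then sz s i else 0))"
        unfolding Mv_def s2_def by (intro sum.cong) (auto simp: algebra_simps)
      also have "\<dots> = Mv s + (\<Sum>i\<in>Arr s. if R i then sz s i else 0)"
        unfolding Mv_def by (simp add: sum.distrib)
      also have "(\<Sum>i\<in>Arr s. if R i then sz s i else 0) = (\<Sum>i\<in>{i\<in>Arr s. R i}. sz s i)"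
        using finA by (simp add: sum.inter_filter)
      also have "{i\<in>Arr s. R i} = {j\<in>PP s. lab s j = B0}" unfolding R_def using PPA by auto
      finally show ?thesis unfolding load_def .
    qed
    have D2: "Dsz s2 = Dsz s" unfolding Dsz_def s2_def by simp
    have clsub: "cls s2 \<subseteq> cls s - {B0}"
      unfolding cls_def P2 using fit(2) by (auto simp: lab2 R_def s2_def)
    have Phi2: "Phi s2 \<le> Phi s - (if B0 \<in> cls s then hh (load s B0) else 0)"
    proof -
      have "Phi s2 = (\<Sum>B\<in>cls s2. hh (load s B))"
        unfolding Phi_def
      proof (intro sum.cong refl)
        fix B assume "B \<in> cls s2"
        then have "B \<noteq> B0" "B \<noteq> ob s" using clsub by (auto simp: cls_def s2_def)
        then show "hh (load s2 B) = hh (load s B)" using ld2 by simp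
      qed
      also have "\<dots> \<le> (\<Sum>B\<in>cls s - {B0}. hh (load s B))"
        using finite_cls[OF inv] clsub by (intro sum_mono2) (auto intro: hh_nonneg)
      also have "\<dots> = Phi s - (if B0 \<in> cls s then hh (load s B0) else 0)"
        unfolding Phi_def using finite_cls[OF inv] by (simp add: sum_diff1)
      finally show ?thesis .
    qed
    have pot: "Mv s2 + Phi s2 \<le> cc * Dsz s2"
    proof (cases "B0 \<in> cls s")
      case True
      have "load s B0 \<le> hh (load s B0)" using hh_small load_nonneg[OF inv] fit(3) by auto
      then show ?thesis using Phi2 True Mv2 D2 inv unfolding invA_def by auto
    next
    case False
      then have "B0 \<notin> lab s ` PP s" using fit unfolding cls_def by auto
      then have "{j\<in>PP s. lab s j = B0} = {}" by auto
      then have "load s B0 = 0" unfolding load_def by (metis sum.empty)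
      then show ?thesis using Phi2 False Mv2 D2 inv unfolding invA_def by auto
    qed
    have "invA s2" unfolding invA_def
    proof (intro conjI)
      show "Mv s2 + Phi s2 \<le> cc * Dsz s2" by (rule pot)
      show "\<forall>B. load s2 B \<le> 1" using fit(4) inv unfolding ld2 invA_def by auto
      show "\<forall>i. i \<notin> Arr s2 \<longrightarrow> mv s2 i = 0" using inv PPA unfolding invA_def s2_def R_def by auto
      show "\<forall>j\<in>PP s2. even (lab s2 j) \<longrightarrow> lab s2 j < 2 * cnt s2"
        using inv unfolding invA_def P2 lab2 by (auto simp: s2_def)
      show "\<forall>j\<in>PP s2. odd (lab s2 j) \<longrightarrow> lab s2 j = 2 * j + 1 \<and> \<alpha> \<le> sz s2 j"
        using inv unfolding invA_def P2 lab2 by (auto simp: s2_def)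
    qed (use inv in \<open>auto simp: invA_def s2_def\<close>)
    moreover have "I8 s2" unfolding I8_def
    proof (intro ballI impI)
      fix B assume B: "B \<in> lab s2 ` PP s2" "B \<noteq> ob s2"
      then obtain j where j: "j \<in> PP s" "B = lab s2 j" unfolding P2 by auto
      have "\<not> R j" using B j by (auto simp: lab2 s2_def)
      then have "B = lab s j" "B \<noteq> B0" using j unfolding lab2 R_def by auto
      moreover have "B \<noteq> ob s" using B by (simp add: s2_def)
      ultimately show "\<alpha> \<le> load s2 B" using h8 j ld2 by auto
    qed
    ultimately show ?thesis unfolding d inv_def by auto
  next
    case nofit
    define s2 where "s2 = s\<lparr>ob := B0\<rparr>"
    have d: "dissolve B0 s = s2" unfolding dissolve_def s2_def using nofit by auto
    have P2: "PP s2 = PP s" unfolding s2_def PP_def by simp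
    have ld2: "load s2 B = load s B" for B unfolding load_def P2 by (simp add: s2_def)
    have obig: "1 - \<alpha> < load s (ob s)" using nofit by auto
    have hob: "hh (load s (ob s)) = 0" using obig by (intro hh_zero) auto
    have clsub: "cls s2 \<subseteq> insert (ob s) (cls s)" unfolding cls_def P2 by (auto simp: s2_def)
    have "ob s \<notin> cls s" unfolding cls_def by auto
    have "Phi s2 \<le> (\<Sum>B\<in>insert (ob s) (cls s). hh (load s B))"
      unfolding Phi_def ld2 using finite_cls[OF inv] clsub by (intro sum_mono2) (auto intro: hh_nonneg)
    also have "\<dots> = Phi s" unfolding Phi_def using finite_cls[OF inv] \<open>ob s \<notin> cls s\<close> hob by simp
    finally have Phi2: "Phi s2 \<le> Phi s" .
    have "invA s2" unfolding invA_def
    proof (intro conjI)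
      show "Mv s2 + Phi s2 \<le> cc * Dsz s2" using Phi2 inv unfolding invA_def
        by (simp add: s2_def Mv_def Dsz_def)
      show "\<forall>B. load s2 B \<le> 1" using inv unfolding ld2 invA_def by auto
      show "even (ob s2)" using nofit by (simp add: s2_def)
      show "ob s2 < 2 * cnt s2" using nofit hev by (simp add: s2_def)
    qed (use inv in \<open>auto simp: invA_def s2_def PP_def\<close>)
    moreover have "I8 s2" unfolding I8_def
    proof (intro ballI impI)
      fix B assume B: "B \<in> lab s2 ` PP s2" "B \<noteq> ob s2"
      then have B': "B \<in> lab s ` PP s" "B \<noteq> B0" unfolding P2 by (auto simp: s2_def)
      show "\<alpha> \<le> load s2 B"
      proof (cases "B = ob s")
        case True then show ?thesis using obig ahalf ld2 by auto
      qed (use h8 B' ld2 in auto)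
    qed
    ultimately show ?thesis unfolding d inv_def by auto
  qed
qed

end


context alg
begin

lemma inv_depart:
  assumes inv: "inv s"
  shows "inv (depart i s)"
proof (cases "i \<in> PP s")
  case True
  have iA: "invA s" "I8 s" using inv unfolding inv_def by auto
  have d: "depart i s = dissolve (lab s i) (remove i s)" unfolding depart_def using True by simp
  show ?thesis unfolding d
  proof (rule inv_dissolve)
    show "invA (remove i s)" using invA_remove(1)[OF iA(1) True] .
    show "\<forall>B\<in>lab (remove i s) ` PP (remove i s). B \<noteq> ob (remove i s) \<longrightarrow> B \<noteq> lab s i \<longrightarrow> \<alpha> \<le> load (remove i s) B"
      using invA_remove(2)[OF iA(1) True] iA(2) by simp
    show "even (lab s i) \<Longrightarrow> lab s i < 2 * cnt (remove i s)"
      using iA(1) True unfolding invA_def by simp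
    show "odd (lab s i) \<Longrightarrow> lab s i \<notin> lab (remove i s) ` PP (remove i s)"
    proof
      assume o: "odd (lab s i)" and "lab s i \<in> lab (remove i s) ` PP (remove i s)"
      then have "lab s i \<in> lab s ` (PP s - {i})" by (simp add: PP_remove)
      then obtain j where j0: "j \<in> PP s - {i}" "lab s i = lab s j" by (rule imageE) auto
      then have j: "j \<in> PP s" "j \<noteq> i" "lab s j = lab s i" by auto
      have "lab s i = 2*i+1" using iA(1) True o unfolding invA_def by auto
      moreover have "lab s j = 2*j+1" using iA(1) j o unfolding invA_def by auto
      ultimately show False using j by auto
    qed
  qed
next
  case False
  have d: "depart i s = remove i s" unfolding depart_def using False by simp
  show ?thesis
  proof (cases "i \<in> Arr s")
    case True
    then have "i \<in> Dep s" using False unfolding PP_def by auto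
    then have "remove i s = s" unfolding remove_def by (simp add: insert_absorb)
    then show ?thesis using d inv by simp
  next
    case nA: False
    let ?r = "remove i s"
    have P: "PP ?r = PP s" using nA unfolding PP_def by auto
    have L: "load ?r B = load s B" for B by (rule load_cong) (auto simp: P)
    have C: "cls ?r = cls s" unfolding cls_def P by simp
    have Ph: "Phi ?r = Phi s" unfolding Phi_def C L ..
    have M: "Mv ?r = Mv s" unfolding Mv_def by simp
    have D: "Dsz ?r = Dsz s" unfolding Dsz_def using nA by (simp add: Int_insert_right)
    show ?thesis using inv unfolding d inv_def invA_def I8_def P L Ph M D by simp
  qed
qed

lemma arr_common:
  assumes inv: "invA s" and i: "i \<notin> Arr s" "i \<notin> Dep s"
    and f: "Arr s1 = insert i (Arr s)" "Dep s1 = Dep s" "sz s1 = (sz s)(i := x)"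
      "lab s1 = (lab s)(i := L)" "mv s1 = mv s"
  shows "PP s1 = insert i (PP s)" "i \<notin> PP s"
    "load s1 B = load s B + (if L = B then x else 0)"
    "Mv s1 = Mv s" "Dsz s1 = Dsz s"
proof -
  show P: "PP s1 = insert i (PP s)" using f i unfolding PP_def by auto
  show iP: "i \<notin> PP s" using i unfolding PP_def by auto
  have finP: "finite (PP s)" using finite_PP[OF inv] .
  let ?S = "{j\<in>PP s. lab s j = B}"
  have S: "(\<Sum>j\<in>?S. sz s1 j) = load s B" unfolding load_def using iP f by (intro sum.cong) auto
  show "load s1 B = load s B + (if L = B then x else 0)"
  proof (cases "L = B")
    case True
    have "{j\<in>PP s1. lab s1 j = B} = insert i ?S" using True iP unfolding P f by auto
    then have "load s1 B = (\<Sum>j\<in>insert i ?S. sz s1 j)" unfolding load_def by simp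
    also have "\<dots> = sz s1 i + (\<Sum>j\<in>?S. sz s1 j)" using finP iP by (intro sum.insert) auto
    finally show ?thesis using S True f by simp
  next
    case False
    have "{j\<in>PP s1. lab s1 j = B} = ?S" using False iP unfolding P f by auto
    then have "load s1 B = (\<Sum>j\<in>?S. sz s1 j)" unfolding load_def by simp
    then show ?thesis using S False by simp
  qed
  have finA: "finite (Arr s)" using inv unfolding invA_def by auto
  have mv0: "mv s i = 0" using inv i unfolding invA_def by auto
  have "Mv s1 = sz s1 i * real (mv s1 i) + (\<Sum>j\<in>Arr s. sz s1 j * real (mv s1 j))"
    unfolding Mv_def f(1) using finA i by (simp add: sum.insert)
  also have "\<dots> = Mv s" unfolding Mv_def using f mv0 i by (auto intro!: sum.cong)
  finally show "Mv s1 = Mv s" .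
  have "Arr s1 \<inter> Dep s1 = Arr s \<inter> Dep s" using f i by auto
  then show "Dsz s1 = Dsz s" unfolding Dsz_def using f i by (auto intro!: sum.cong)
qed

end


context alg
begin

lemma arr_img:
  assumes i: "i \<notin> PP s" and f: "PP s1 = insert i (PP s)" "lab s1 = (lab s)(i := L)"
  shows "lab s1 ` PP s1 = insert L (lab s ` PP s)"
  using i unfolding f by (auto simp: image_iff)

lemma inv_arrive:
  assumes inv: "inv s" and x: "0 \<le> x" "x \<le> 1"
  shows "inv (arrive i x s)"
proof -
  have iA: "invA s" "I8 s" using inv unfolding inv_def by auto
  have finA: "finite (Arr s)" using iA unfolding invA_def by auto
  consider (old) "i \<in> Arr s" | (ghost) "i \<notin> Arr s" "i \<in> Dep s"
    | (large) "i \<notin> Arr s" "i \<notin> Dep s" "\<alpha> \<le> x"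
    | (fit) "i \<notin> Arr s" "i \<notin> Dep s" "\<not> \<alpha> \<le> x" "load s (ob s) + x \<le> 1"
    | (nofit) "i \<notin> Arr s" "i \<notin> Dep s" "\<not> \<alpha> \<le> x" "\<not> load s (ob s) + x \<le> 1"
    by blast
  then show ?thesis
  proof cases
    case old
    then show ?thesis using inv unfolding arrive_def by simp
  next
    case ghost
    let ?s1 = "s\<lparr>Arr := insert i (Arr s), sz := (sz s)(i := x)\<rparr>"
    have a: "arrive i x s = ?s1" unfolding arrive_def using ghost by simp
    have P: "PP ?s1 = PP s" using ghost unfolding PP_def by auto
    have iP: "i \<notin> PP s" using ghost unfolding PP_def by auto
    have L: "load ?s1 B = load s B" for B by (rule load_cong) (use iP in \<open>auto simp: P\<close>)
    have C: "cls ?s1 = cls s" unfolding cls_def P by simp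
    have Ph: "Phi ?s1 = Phi s" unfolding Phi_def C L ..
    have mv0: "mv s i = 0" using iA ghost unfolding invA_def by auto
    have M: "Mv ?s1 = Mv s"
    proof -
      have "Mv ?s1 = x * real (mv s i) + (\<Sum>j\<in>Arr s. sz ?s1 j * real (mv s j))"
        unfolding Mv_def using finA ghost by (simp add: sum.insert)
      also have "\<dots> = Mv s" unfolding Mv_def using mv0 ghost by (auto intro!: sum.cong)
      finally show ?thesis .
    qed
    have D: "Dsz ?s1 = Dsz s + x"
    proof -
      have "Arr ?s1 \<inter> Dep ?s1 = insert i (Arr s \<inter> Dep s)" using ghost by auto
      then have "Dsz ?s1 = x + (\<Sum>j\<in>Arr s \<inter> Dep s. sz ?s1 j)"
        unfolding Dsz_def using finA ghost by (simp add: sum.insert)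
      also have "(\<Sum>j\<in>Arr s \<inter> Dep s. sz ?s1 j) = Dsz s" unfolding Dsz_def using ghost
        by (auto intro!: sum.cong)
      finally show ?thesis by (simp add: fun_upd_def)
    qed
    have "cc * Dsz s \<le> cc * Dsz ?s1" using D x cc_pos by auto
    then show ?thesis using inv x ghost unfolding a inv_def invA_def I8_def P L Ph M
      by (auto simp: PP_def)
  next
    case large
    let ?s1 = "s\<lparr>Arr := insert i (Arr s), sz := (sz s)(i := x), lab := (lab s)(i := 2*i+1)\<rparr>"
    have a: "arrive i x s = ?s1" unfolding arrive_def using large by simp
    have C: "PP ?s1 = insert i (PP s)" "i \<notin> PP s"
        "\<And>B. load ?s1 B = load s B + (if 2*i+1 = B then x else 0)" "Mv ?s1 = Mv s" "Dsz ?s1 = Dsz s"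
      using arr_common[OF iA(1) large(1,2), of ?s1 x "2*i+1"] by simp_all
    have img: "lab ?s1 ` PP ?s1 = insert (2*i+1) (lab s ` PP s)"
      by (rule arr_img) (use C in auto)
    have z: "load s (2*i+1) = 0"
    proof -
      have "{j\<in>PP s. lab s j = 2*i+1} = {}"
      proof (rule ccontr)
        assume "{j\<in>PP s. lab s j = 2*i+1} \<noteq> {}"
        then obtain j where j: "j \<in> PP s" "lab s j = 2*i+1" by auto
        then have "lab s j = 2*j+1" using iA(1) unfolding invA_def by auto
        then show False using j C(2) by auto
      qed
      then show ?thesis unfolding load_def by (metis sum.empty)
    qed
    have Cl: "cls ?s1 = cls s" unfolding cls_def img by auto
    have Ph: "Phi ?s1 = Phi s" unfolding Phi_def Cl
    proof (intro sum.cong refl)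
      fix B assume "B \<in> cls s"
      then have "even B" unfolding cls_def by auto
      then have "B \<noteq> 2*i+1" by auto
      then show "hh (load ?s1 B) = hh (load s B)" using C(3)[of B] by simp
    qed
    have "invA ?s1" unfolding invA_def
    proof (intro conjI)
      show "Mv ?s1 + Phi ?s1 \<le> cc * Dsz ?s1" using iA(1) unfolding invA_def C(4,5) Ph by simp
      show "\<forall>B. load ?s1 B \<le> 1" using iA(1) z x unfolding invA_def C(3) by auto
      show "\<forall>j\<in>PP ?s1. odd (lab ?s1 j) \<longrightarrow> lab ?s1 j = 2 * j + 1 \<and> \<alpha> \<le> sz ?s1 j"
        using iA(1) large C(2) unfolding invA_def C(1) by auto
      show "\<forall>j\<in>PP ?s1. even (lab ?s1 j) \<longrightarrow> lab ?s1 j < 2 * cnt ?s1"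
        using iA(1) C(2) unfolding invA_def C(1) by auto
    qed (use iA(1) x in \<open>auto simp: invA_def\<close>)
    moreover have "I8 ?s1" unfolding I8_def img
    proof (intro ballI impI)
      fix B assume B: "B \<in> insert (2*i+1) (lab s ` PP s)" "B \<noteq> ob ?s1"
      show "\<alpha> \<le> load ?s1 B"
      proof (cases "B = 2*i+1")
        case True then show ?thesis using z large unfolding C(3) by simp
      next
        case False then show ?thesis using B iA(2) unfolding C(3) I8_def by auto
      qed
    qed
    ultimately show ?thesis unfolding a inv_def by auto
  next
    case fit
    let ?s1 = "s\<lparr>Arr := insert i (Arr s), sz := (sz s)(i := x), lab := (lab s)(i := ob s)\<rparr>"
    have a: "arrive i x s = ?s1" unfolding arrive_def using fit by simp
    have C: "PP ?s1 = insert i (PP s)" "i \<notin> PP s"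
        "\<And>B. load ?s1 B = load s B + (if ob s = B then x else 0)" "Mv ?s1 = Mv s" "Dsz ?s1 = Dsz s"
      using arr_common[OF iA(1) fit(1,2), of ?s1 x "ob s"] by simp_all
    have img: "lab ?s1 ` PP ?s1 = insert (ob s) (lab s ` PP s)"
      by (rule arr_img) (use C in auto)
    have Cl: "cls ?s1 = cls s" unfolding cls_def img by auto
    have Ph: "Phi ?s1 = Phi s" unfolding Phi_def Cl
      by (intro sum.cong refl) (auto simp: C(3) cls_def)
    have "invA ?s1" unfolding invA_def
    proof (intro conjI)
      show "Mv ?s1 + Phi ?s1 \<le> cc * Dsz ?s1" using iA(1) unfolding invA_def C(4,5) Ph by simp
      show "\<forall>B. load ?s1 B \<le> 1" using iA(1) fit x unfolding invA_def C(3) by auto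
      show "\<forall>j\<in>PP ?s1. odd (lab ?s1 j) \<longrightarrow> lab ?s1 j = 2 * j + 1 \<and> \<alpha> \<le> sz ?s1 j"
        using iA(1) C(2) unfolding invA_def C(1) by auto
      show "\<forall>j\<in>PP ?s1. even (lab ?s1 j) \<longrightarrow> lab ?s1 j < 2 * cnt ?s1"
        using iA(1) C(2) unfolding invA_def C(1) by auto
    qed (use iA(1) x in \<open>auto simp: invA_def\<close>)
    moreover have "I8 ?s1" unfolding I8_def img
      using iA(2) unfolding C(3) I8_def by auto
    ultimately show ?thesis unfolding a inv_def by auto
  next
    case nofit
    let ?s1 = "s\<lparr>Arr := insert i (Arr s), sz := (sz s)(i := x), lab := (lab s)(i := 2 * cnt s),
            ob := 2 * cnt s, cnt := Suc (cnt s)\<rparr>"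
    have a: "arrive i x s = ?s1" unfolding arrive_def using nofit by simp
    have C: "PP ?s1 = insert i (PP s)" "i \<notin> PP s"
        "\<And>B. load ?s1 B = load s B + (if 2 * cnt s = B then x else 0)" "Mv ?s1 = Mv s" "Dsz ?s1 = Dsz s"
      using arr_common[OF iA(1) nofit(1,2), of ?s1 x "2 * cnt s"] by simp_all
    have img: "lab ?s1 ` PP ?s1 = insert (2 * cnt s) (lab s ` PP s)"
      by (rule arr_img) (use C in auto)
    have z: "load s (2 * cnt s) = 0"
    proof -
      have "{j\<in>PP s. lab s j = 2 * cnt s} = {}" using iA(1) unfolding invA_def by force
      then show ?thesis unfolding load_def by (metis sum.empty)
    qed
    have obig: "1 - \<alpha> < load s (ob s)" using nofit by auto
    have hob: "hh (load s (ob s)) = 0" using obig by (intro hh_zero) auto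
    have lt: "B \<in> insert (ob s) (cls s) \<Longrightarrow> B < 2 * cnt s" for B
      using iA(1) unfolding cls_def invA_def by auto
    have clsub: "cls ?s1 \<subseteq> insert (ob s) (cls s)" unfolding cls_def img by auto
    have "ob s \<notin> cls s" unfolding cls_def by auto
    have "Phi ?s1 \<le> (\<Sum>B\<in>insert (ob s) (cls s). hh (load ?s1 B))"
      unfolding Phi_def using finite_cls[OF iA(1)] clsub by (intro sum_mono2) (auto intro: hh_nonneg)
    also have "\<dots> = (\<Sum>B\<in>insert (ob s) (cls s). hh (load s B))"
      using lt by (intro sum.cong refl) (auto simp: C(3))
    also have "\<dots> = Phi s" unfolding Phi_def using finite_cls[OF iA(1)] \<open>ob s \<notin> cls s\<close> hob by simp
    finally have Ph: "Phi ?s1 \<le> Phi s" .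
    have "invA ?s1" unfolding invA_def
    proof (intro conjI)
      show "Mv ?s1 + Phi ?s1 \<le> cc * Dsz ?s1" using iA(1) Ph unfolding invA_def C(4,5) by simp
      show "\<forall>B. load ?s1 B \<le> 1" using iA(1) z x unfolding invA_def C(3) by auto
      show "\<forall>j\<in>PP ?s1. odd (lab ?s1 j) \<longrightarrow> lab ?s1 j = 2 * j + 1 \<and> \<alpha> \<le> sz ?s1 j"
        using iA(1) C(2) unfolding invA_def C(1) by auto
      show "\<forall>j\<in>PP ?s1. even (lab ?s1 j) \<longrightarrow> lab ?s1 j < 2 * cnt ?s1"
      proof (intro ballI impI)
        fix j assume j: "j \<in> PP ?s1" "even (lab ?s1 j)"
        show "lab ?s1 j < 2 * cnt ?s1"
        proof (cases "j = i")
          case False then have "j \<in> PP s" "lab ?s1 j = lab s j" using j C(1) by auto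
          then show ?thesis using iA(1) j unfolding invA_def by auto
        qed simp
      qed
    qed (use iA(1) x in \<open>auto simp: invA_def\<close>)
    moreover have "I8 ?s1" unfolding I8_def img
    proof (intro ballI impI)
      fix B assume B: "B \<in> insert (2 * cnt s) (lab s ` PP s)" "B \<noteq> ob ?s1"
      then have B': "B \<in> lab s ` PP s" "B \<noteq> 2 * cnt s" by auto
      show "\<alpha> \<le> load ?s1 B"
      proof (cases "B = ob s")
        case True then show ?thesis using obig ahalf B' unfolding C(3) by auto
      next
        case False then show ?thesis using B' iA(2) unfolding C(3) I8_def by auto
      qed
    qed
    ultimately show ?thesis unfolding a inv_def by auto
  qed
qed

lemma inv_step:
  assumes "inv s" "snd (snd (snd e)) \<in> {0..1}"
  shows "inv (step e s)"
  using assms inv_depart inv_arrive unfolding step_def by (auto split: prod.splits)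

end


context alg
begin

lemma dissolve_fields: "Arr (dissolve B s) = Arr s" "Dep (dissolve B s) = Dep s" "sz (dissolve B s) = sz s"
  unfolding dissolve_def by (auto simp: Let_def)

lemma depart_fields: "Arr (depart i s) = Arr s" "Dep (depart i s) = insert i (Dep s)" "sz (depart i s) = sz s"
  unfolding depart_def by (auto simp: dissolve_fields)

lemma arrive_fields: "Arr (arrive i x s) = insert i (Arr s)" "Dep (arrive i x s) = Dep s"
  "sz (arrive i x s) = (if i \<in> Arr s then sz s else (sz s)(i := x))"
  unfolding arrive_def by (auto simp: insert_absorb)

lemma step_Arr: "Arr (step (t,k,i,x) s) = (if k = 0 then Arr s else insert i (Arr s))"
  and step_Dep: "Dep (step (t,k,i,x) s) = (if k = 0 then insert i (Dep s) else Dep s)"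
  and step_sz: "sz (step (t,k,i,x) s) = (if k = 0 \<or> i \<in> Arr s then sz s else (sz s)(i := x))"
  unfolding step_def by (auto simp: depart_fields arrive_fields)

lemma dissolve_mv:
  "mv s j \<le> mv (dissolve B s) j \<and> (j \<in> PP s \<longrightarrow> lab (dissolve B s) j \<noteq> lab s j \<longrightarrow> mv (dissolve B s) j = Suc (mv s j))"
  unfolding dissolve_def by auto

lemma step_mv:
  "mv s j \<le> mv (step e s) j \<and> (j \<in> PP s \<longrightarrow> j \<in> PP (step e s) \<longrightarrow> lab (step e s) j \<noteq> lab s j \<longrightarrow> mv (step e s) j = Suc (mv s j))"
proof -
  obtain t k i x where e: "e = (t,k,i,x)" by (cases e) auto
  show ?thesis
  proof (cases "k = 0")
    case True
    have st: "step e s = depart i s" unfolding e step_def using True by simp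
    show ?thesis
    proof (cases "i \<in> PP s")
      case True
      have d: "depart i s = dissolve (lab s i) (remove i s)" unfolding depart_def using True by simp
      have "PP (step e s) = PP s - {i}" unfolding st d PP_def by (auto simp: dissolve_fields)
      then show ?thesis using dissolve_mv[of "remove i s" j "lab s i"] unfolding st d
        by (auto simp: PP_remove)
    next
      case False
      then show ?thesis unfolding st depart_def by (simp add: remove_def)
    qed
  next
    case False
    have st: "step e s = arrive i x s" unfolding e step_def using False by simp
    show ?thesis unfolding st arrive_def by (auto simp: PP_def)
  qed
qed

lemma fold_Arr: "Arr (fold step xs s) = Arr s \<union> {i. \<exists>t k x. (t,k,i,x) \<in> set xs \<and> k \<noteq> 0}"
proof (induction xs arbitrary: s)
  case (Cons e xs)
  obtain t k i x where e: "e = (t,k,i,x)" by (cases e) auto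
  show ?case using Cons[of "step e s"] unfolding e by (auto simp: step_Arr split: if_splits)
qed simp

lemma fold_Dep: "Dep (fold step xs s) = Dep s \<union> {i. \<exists>t k x. (t,k,i,x) \<in> set xs \<and> k = 0}"
proof (induction xs arbitrary: s)
  case (Cons e xs)
  obtain t k i x where e: "e = (t,k,i,x)" by (cases e) auto
  show ?case using Cons[of "step e s"] unfolding e by (auto simp: step_Dep split: if_splits)
qed simp

lemma fold_inv: "inv s \<Longrightarrow> \<forall>e\<in>set xs. snd (snd (snd e)) \<in> {0..1} \<Longrightarrow> inv (fold step xs s)"
proof (induction xs arbitrary: s)
  case (Cons e xs)
  have "inv (step e s)" using Cons.prems by (intro inv_step) auto
  then show ?case using Cons.IH Cons.prems by simp
qed simp

lemma fold_mv_mono: "mv s j \<le> mv (fold step xs s) j"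
proof (induction xs arbitrary: s)
  case (Cons e xs)
  show ?case using Cons[of "step e s"] step_mv[of s j e] by auto
qed simp

lemma fold_mv_change:
  "j \<in> PP s \<Longrightarrow> j \<in> PP (fold step xs s) \<Longrightarrow> lab (fold step xs s) j \<noteq> lab s j \<Longrightarrow> mv s j < mv (fold step xs s) j"
proof (induction xs arbitrary: s)
  case (Cons e xs)
  let ?s = "step e s"
  have "j \<in> Arr ?s" using Cons.prems(1) step_Arr[of _ _ _ _ s] unfolding PP_def
    by (cases e) (auto split: if_splits)
  moreover have "j \<notin> Dep ?s" using Cons.prems(2) unfolding PP_def by (auto simp: fold_Dep)
  ultimately have jP: "j \<in> PP ?s" unfolding PP_def by auto
  show ?case
  proof (cases "lab ?s j = lab s j")
    case True
    then show ?thesis using Cons.IH[of ?s] Cons.prems jP step_mv[of s j e] by auto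
  next
    case False
    then have "mv ?s j = Suc (mv s j)" using step_mv[of s j e] Cons.prems jP by auto
    then show ?thesis using fold_mv_mono[of ?s j xs] by auto
  qed
qed simp

lemma fold_sz:
  "(\<And>t k i x. (t,k,i,x) \<in> set xs \<Longrightarrow> k \<noteq> 0 \<Longrightarrow> x = \<sigma> i) \<Longrightarrow> (\<forall>i\<in>Arr s. sz s i = \<sigma> i)
   \<Longrightarrow> \<forall>i\<in>Arr (fold step xs s). sz (fold step xs s) i = \<sigma> i"
proof (induction xs arbitrary: s)
  case (Cons e xs)
  obtain t k i x where e: "e = (t,k,i,x)" by (cases e) auto
  have "\<forall>j\<in>Arr (step e s). sz (step e s) j = \<sigma> j"
    using Cons.prems unfolding e by (auto simp: step_Arr step_sz)
  moreover have "\<And>t k i x. (t,k,i,x) \<in> set xs \<Longrightarrow> k \<noteq> 0 \<Longrightarrow> x = \<sigma> i" using Cons.prems(1) by auto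
  ultimately show ?case using Cons.IH[of "step e s"] by simp
qed simp

end


lemma prod_le_fst: "(x::'a::linorder \<times> 'b::linorder) \<le> y \<Longrightarrow> fst x \<le> fst y"
  by (auto simp: less_eq_prod_def)

lemma count_lemma:
  fixes g :: "real \<Rightarrow> nat"
  assumes E: "finite E" and mono: "\<And>x y. x \<le> y \<Longrightarrow> g x \<le> g y" and M: "\<And>t. g t \<le> M"
    and T: "T \<subseteq> {t\<in>E. \<exists>e\<in>E. e < t}" and inc: "\<And>t. t \<in> T \<Longrightarrow> g (Max {e\<in>E. e < t}) < g t"
  shows "card T \<le> M"
proof -
  define f where "f t = g (Max {e\<in>E. e < t})" for t
  have lt: "f t1 < f t2" if t: "t1 \<in> T" "t2 \<in> T" "t1 < t2" for t1 t2
  proof -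
    have "t1 \<in> {e\<in>E. e < t2}" using t T by auto
    moreover have "finite {e\<in>E. e < t2}" using E by auto
    ultimately have "t1 \<le> Max {e\<in>E. e < t2}" by (rule Max_ge[rotated])
    then have "g t1 \<le> f t2" unfolding f_def by (rule mono)
    moreover have "f t1 < g t1" using inc t unfolding f_def by auto
    ultimately show ?thesis by simp
  qed
  have "inj_on f T"
  proof (rule inj_onI)
    fix x y assume xy: "x \<in> T" "y \<in> T" "f x = f y"
    show "x = y"
    proof (rule ccontr)
      assume "x \<noteq> y"
      then have "x < y \<or> y < x" by auto
      then show False using lt xy by (metis less_irrefl)
    qed
  qed
  moreover have "f ` T \<subseteq> {..<M}" using inc M unfolding f_def by (auto intro: less_le_trans)
  ultimately have "card T \<le> card {..<M}" by (intro card_inj_on_le) auto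
  then show ?thesis by simp
qed

context alg
begin

definition init :: bst where
  "init = \<lparr>Arr = {}, Dep = {}, sz = (\<lambda>_. 0), lab = (\<lambda>_. 0), mv = (\<lambda>_. 0), ob = 0, cnt = 1\<rparr>"

lemma inv_init: "inv init"
proof -
  have P: "PP init = {}" unfolding PP_def init_def by simp
  have L: "load init B = 0" for B unfolding load_def P by simp
  have C: "cls init = {}" unfolding cls_def P by simp
  have Ph: "Phi init = 0" unfolding Phi_def C by simp
  show ?thesis unfolding inv_def invA_def I8_def P L Ph
    by (simp add: init_def Mv_def Dsz_def)
qed

definition evs :: "view \<Rightarrow> (real \<times> nat \<times> nat \<times> real) set" where
  "evs v = {(a, 1, i, x) | a i x e. v i = Some (a, x, e)} \<union> {(e, 0, i, x) | a i x e. v i = Some (a, x, Some e)}"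

definition algo :: algorithm where
  "algo v = lab (fold step (sorted_list_of_set (evs v)) init)"

definition Eall :: "nat \<Rightarrow> (nat \<Rightarrow> real) \<Rightarrow> (nat \<Rightarrow> real) \<Rightarrow> (nat \<Rightarrow> real) \<Rightarrow> (real \<times> nat \<times> nat \<times> real) set" where
  "Eall n a s d = {(a i, 1, i, s i) | i. i < n} \<union> {(a i + d i, 0, i, s i) | i. i < n}"

lemma finite_Eall: "finite (Eall n a s d)"
proof -
  have "Eall n a s d = (\<lambda>i. (a i, 1, i, s i)) ` {..<n} \<union> (\<lambda>i. (a i + d i, 0, i, s i)) ` {..<n}"
    unfolding Eall_def by auto
  then show ?thesis by simp
qed

lemma evs_view:
  assumes "valid_instance n a s d"
  shows "evs (view_at n a s d t) = {e \<in> Eall n a s d. fst e \<le> t}"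
proof -
  have dpos: "\<And>i. i < n \<Longrightarrow> 0 < d i" using assms unfolding valid_instance_def by auto
  show ?thesis
  proof (intro set_eqI iffI)
    fix e assume "e \<in> evs (view_at n a s d t)"
    then show "e \<in> {e \<in> Eall n a s d. fst e \<le> t}"
      unfolding evs_def view_at_def Eall_def by (auto split: if_splits)
  next
    fix e assume "e \<in> {e \<in> Eall n a s d. fst e \<le> t}"
    then consider (A) i where "i < n" "e = (a i, 1, i, s i)" "a i \<le> t"
      | (D) i where "i < n" "e = (a i + d i, 0, i, s i)" "a i + d i \<le> t"
      unfolding Eall_def by auto
    then show "e \<in> evs (view_at n a s d t)"
    proof cases
      case A
      then show ?thesis unfolding evs_def view_at_def by auto
    next
      case D
      then have "a i \<le> t" using dpos[of i] by auto
      then show ?thesis using D unfolding evs_def view_at_def by auto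
    qed
  qed
qed

end


lemma OPT_lower:
  assumes valid: "valid_instance n a s d"
  shows "(\<Sum>i\<in>present n a d t. s i) \<le> real (OPT n a s d t)"
proof -
  let ?P = "present n a d t"
  have finP: "finite ?P" unfolding present_def by auto
  let ?Q = "\<lambda>k. \<exists>f :: nat \<Rightarrow> nat. (\<forall>i\<in>?P. f i < k) \<and> (\<forall>b<k. (\<Sum>i\<in>{i\<in>?P. f i = b}. s i) \<le> 1)"
  have "?Q n"
  proof (intro exI[of _ id] conjI allI impI ballI)
    fix i assume "i \<in> ?P" then show "id i < n" unfolding present_def by auto
  next
    fix b assume "b < n"
    have "{i\<in>?P. id i = b} \<subseteq> {b}" by auto
    then have "(\<Sum>i\<in>{i\<in>?P. id i = b}. s i) \<le> (\<Sum>i\<in>{b}. s i)"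
      using valid \<open>b < n\<close> unfolding valid_instance_def by (intro sum_mono2) auto
    also have "\<dots> \<le> 1" using valid \<open>b < n\<close> unfolding valid_instance_def by auto
    finally show "(\<Sum>i\<in>{i\<in>?P. id i = b}. s i) \<le> 1" .
  qed
  then have "?Q (OPT n a s d t)" unfolding OPT_def by (rule LeastI_ex[of ?Q, OF exI])
  then obtain f where f: "\<forall>i\<in>?P. f i < OPT n a s d t"
    "\<forall>b<OPT n a s d t. (\<Sum>i\<in>{i\<in>?P. f i = b}. s i) \<le> 1" by blast
  have "(\<Sum>i\<in>?P. s i) = (\<Sum>b\<in>{..<OPT n a s d t}. \<Sum>i\<in>{i\<in>?P. f i = b}. s i)"
    using f(1) finP by (intro sum.group[symmetric]) auto
  also have "\<dots> \<le> (\<Sum>b\<in>{..<OPT n a s d t}. 1)" using f(2) by (intro sum_mono) auto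
  finally show ?thesis by simp
qed

context alg
begin

context
  fixes n a s d
  assumes valid: "valid_instance n a s d"
begin

definition LL where "LL = sorted_list_of_set (Eall n a s d)"
definition ST where "ST t = fold step (filter (\<lambda>e. fst e \<le> t) LL) init"
definition FF where "FF = fold step LL init"

lemma setLL: "set LL = Eall n a s d" unfolding LL_def using finite_Eall by simp
lemma sortedLL: "sorted LL" unfolding LL_def by simp

lemma packing_ST: "alg_packing algo n a s d t = lab (ST t)"
  unfolding alg_packing_def algo_def evs_view[OF valid] ST_def LL_def
  using finite_Eall by (simp add: sorted_list_of_set_filter)

lemma ev_valid: "\<forall>e\<in>set xs. snd (snd (snd e)) \<in> {0..1}" if "set xs \<subseteq> Eall n a s d" for xs
  using that valid unfolding valid_instance_def Eall_def by auto

lemma inv_ST: "inv (ST t)" unfolding ST_def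
  by (rule fold_inv[OF inv_init]) (rule ev_valid, auto simp: setLL)

lemma inv_FF: "inv FF" unfolding FF_def
  by (rule fold_inv[OF inv_init]) (rule ev_valid, auto simp: setLL)

lemma Arr_ST: "Arr (ST t) = {i. i < n \<and> a i \<le> t}"
  unfolding ST_def fold_Arr by (auto simp: init_def setLL Eall_def)

lemma Dep_ST: "Dep (ST t) = {i. i < n \<and> a i + d i \<le> t}"
  unfolding ST_def fold_Dep by (auto simp: init_def setLL Eall_def)

lemma PP_ST: "PP (ST t) = present n a d t"
  unfolding PP_def Arr_ST Dep_ST present_def by auto

lemma Arr_FF: "Arr FF = {..<n}"
  unfolding FF_def fold_Arr by (auto simp: init_def setLL Eall_def)

lemma Dep_FF: "Dep FF \<subseteq> {..<n}"
  unfolding FF_def fold_Dep by (auto simp: init_def setLL Eall_def)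

lemma sz_gen: "\<forall>i\<in>Arr (fold step xs init). sz (fold step xs init) i = s i" if "set xs \<subseteq> Eall n a s d" for xs
  by (rule fold_sz) (use that in \<open>auto simp: Eall_def init_def\<close>)

lemma sz_ST: "i \<in> Arr (ST t) \<Longrightarrow> sz (ST t) i = s i"
  using sz_gen[of "filter (\<lambda>e. fst e \<le> t) LL"] unfolding ST_def by (auto simp: setLL)

lemma sz_FF: "i \<in> Arr FF \<Longrightarrow> sz FF i = s i"
  using sz_gen[of LL] unfolding FF_def by (auto simp: setLL)

lemma ST_split: "t' \<le> t \<Longrightarrow> ST t = fold step (filter (\<lambda>e. fst e \<le> t \<and> \<not> fst e \<le> t') LL) (ST t')"
proof -
  assume tt: "t' \<le> t"
  have "filter (\<lambda>e. fst e \<le> t) LL = filter (\<lambda>e. fst e \<le> t') LL @ filter (\<lambda>e. fst e \<le> t \<and> \<not> fst e \<le> t') LL"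
    by (rule fold_filter_split[OF sortedLL]) (use tt prod_le_fst in \<open>fastforce+\<close>)
  then show ?thesis unfolding ST_def by simp
qed

lemma FF_split: "FF = fold step (filter (\<lambda>e. \<not> fst e \<le> t) LL) (ST t)"
proof -
  have "filter (\<lambda>e. True) LL = filter (\<lambda>e. fst e \<le> t) LL @ filter (\<lambda>e. True \<and> \<not> fst e \<le> t) LL"
    by (rule fold_filter_split[OF sortedLL]) (use prod_le_fst in \<open>fastforce+\<close>)
  then have e: "LL = filter (\<lambda>e. fst e \<le> t) LL @ filter (\<lambda>e. \<not> fst e \<le> t) LL" by simp
  have "fold step LL init = fold step (filter (\<lambda>e. fst e \<le> t) LL @ filter (\<lambda>e. \<not> fst e \<le> t) LL) init"
    using e by (rule arg_cong)
  then show ?thesis unfolding ST_def FF_def by simp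
qed

end

end


context alg
begin

context
  fixes n a s d
  assumes valid: "valid_instance n a s d"
begin

lemma feasible: "feasible_at algo n a s d t"
  unfolding feasible_at_def packing_ST[OF valid]
proof
  fix b
  have "(\<Sum>i\<in>{i\<in>present n a d t. lab (ST n a s d t) i = b}. s i) = load (ST n a s d t) b"
    unfolding load_def PP_ST[OF valid]
    by (intro sum.cong refl) (auto simp: sz_ST[OF valid] PP_ST[OF valid, symmetric] PP_def)
  also have "\<dots> \<le> 1" using inv_ST[OF valid, of t] unfolding inv_def invA_def by auto
  finally show "(\<Sum>i\<in>{i\<in>present n a d t. lab (ST n a s d t) i = b}. s i) \<le> 1" .
qed

lemma bins: "real (open_bins algo n a s d t) \<le> real (OPT n a s d t) / \<alpha> + 1"
proof -
  define S where "S = ST n a s d t"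
  have iS: "invA S" "I8 S" using inv_ST[OF valid, of t] unfolding S_def inv_def by auto
  define P where "P = PP S"
  define L where "L = lab S ` P"
  have finP: "finite P" unfolding P_def using finite_PP[OF iS(1)] .
  have finL: "finite L" unfolding L_def using finP by simp
  have ob: "open_bins algo n a s d t = card L"
    unfolding open_bins_def packing_ST[OF valid] L_def P_def S_def PP_ST[OF valid] ..
  have "(\<Sum>i\<in>present n a d t. s i) = (\<Sum>i\<in>P. sz S i)"
    unfolding P_def S_def PP_ST[OF valid]
    by (intro sum.cong refl) (auto simp: sz_ST[OF valid] PP_ST[OF valid, symmetric] PP_def)
  also have "\<dots> = (\<Sum>B\<in>L. load S B)"
    unfolding load_def L_def P_def
    by (rule sum.group[symmetric]) (use finP in \<open>auto simp: P_def\<close>)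
  finally have sumeq: "(\<Sum>i\<in>present n a d t. s i) = (\<Sum>B\<in>L. load S B)" .
  have "(\<Sum>B\<in>L - {ob S}. \<alpha>) \<le> (\<Sum>B\<in>L - {ob S}. load S B)"
    using iS(2) unfolding I8_def L_def P_def by (intro sum_mono) auto
  also have "\<dots> \<le> (\<Sum>B\<in>L. load S B)"
    using finL load_nonneg[OF iS(1)] by (intro sum_mono2) auto
  finally have "\<alpha> * real (card (L - {ob S})) \<le> (\<Sum>B\<in>L. load S B)" by (simp add: mult.commute)
  moreover have "real (card L) - 1 \<le> real (card (L - {ob S}))"
    using finL by (auto simp: card_Diff_singleton_if)
  ultimately have "\<alpha> * (real (card L) - 1) \<le> real (OPT n a s d t)"
    using OPT_lower[OF valid, of t] sumeq apos
    by (smt (verit, ccfv_SIG) mult_left_mono)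
  then have "real (card L) - 1 \<le> real (OPT n a s d t) / \<alpha>"
    using apos by (simp add: pos_le_divide_eq mult.commute)
  then show ?thesis unfolding ob by simp
qed

lemma mig_i:
  assumes i: "i < n"
  shows "migrations algo n a s d i \<le> mv (FF n a s d) i"
proof -
  let ?E = "event_times n a d"
  let ?g = "\<lambda>t. mv (ST n a s d t) i"
  have finE: "finite ?E" unfolding event_times_def by simp
  have aiE: "a i \<in> ?E" unfolding event_times_def using i by auto
  have mono: "?g x \<le> ?g y" if "x \<le> y" for x y
    unfolding ST_split[OF valid that] by (rule fold_mv_mono)
  have M: "?g t \<le> mv (FF n a s d) i" for t
    unfolding FF_split[OF valid, of t] by (rule fold_mv_mono)
  show ?thesis unfolding migrations_def packing_ST[OF valid]
  proof (rule count_lemma[OF finE mono M])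
    show "{t \<in> ?E. a i < t \<and> t < a i + d i \<and> lab (ST n a s d t) i \<noteq> lab (ST n a s d (Max {e \<in> ?E. e < t})) i}
        \<subseteq> {t \<in> ?E. \<exists>e\<in>?E. e < t}" using aiE by auto
  next
    fix t assume "t \<in> {t \<in> ?E. a i < t \<and> t < a i + d i \<and> lab (ST n a s d t) i \<noteq> lab (ST n a s d (Max {e \<in> ?E. e < t})) i}"
    then have t: "a i < t" "t < a i + d i" "lab (ST n a s d t) i \<noteq> lab (ST n a s d (Max {e \<in> ?E. e < t})) i"
      by auto
    define p where "p = Max {e \<in> ?E. e < t}"
    have fin: "finite {e \<in> ?E. e < t}" using finE by auto
    have ne: "a i \<in> {e \<in> ?E. e < t}" using aiE t by auto
    have "p \<in> {e \<in> ?E. e < t}" unfolding p_def using fin ne by (intro Max_in) auto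
    then have pt: "p < t" by auto
    have aip: "a i \<le> p" unfolding p_def using fin ne by (intro Max_ge) auto
    have iP1: "i \<in> PP (ST n a s d p)" unfolding PP_ST[OF valid] present_def using i aip pt t by auto
    have iP2: "i \<in> PP (ST n a s d t)" unfolding PP_ST[OF valid] present_def using i t by auto
    have eq: "ST n a s d t = fold step (filter (\<lambda>e. fst e \<le> t \<and> \<not> fst e \<le> p) (LL n a s d)) (ST n a s d p)"
      using ST_split[OF valid] pt by simp
    show "?g (Max {e \<in> ?E. e < t}) < ?g t"
      unfolding p_def[symmetric] using fold_mv_change[OF iP1, of "filter (\<lambda>e. fst e \<le> t \<and> \<not> fst e \<le> p) (LL n a s d)"]
        iP2 t(3) unfolding eq[symmetric] p_def[symmetric] by auto
  qed
qed

lemma migrated: "migrated_size algo n a s d \<le> cc * (\<Sum>i<n. s i)"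
proof -
  let ?F = "FF n a s d"
  have iF: "invA ?F" using inv_FF[OF valid] unfolding inv_def by auto
  have s0: "\<And>i. i < n \<Longrightarrow> 0 \<le> s i" using valid unfolding valid_instance_def by auto
  have "migrated_size algo n a s d \<le> (\<Sum>i<n. s i * real (mv ?F i))"
    unfolding migrated_size_def
    by (intro sum_mono mult_left_mono) (auto simp: mig_i s0)
  also have "\<dots> = Mv ?F" unfolding Mv_def Arr_FF[OF valid]
    by (intro sum.cong refl) (auto simp: sz_FF[OF valid] Arr_FF[OF valid])
  also have "\<dots> \<le> cc * Dsz ?F" using iF Phi_nonneg[of ?F] unfolding invA_def by linarith
  also have "Dsz ?F \<le> (\<Sum>i<n. s i)"
  proof -
    have "Dsz ?F = (\<Sum>i\<in>Arr ?F \<inter> Dep ?F. s i)" unfolding Dsz_def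
      by (intro sum.cong refl) (auto simp: sz_FF[OF valid])
    also have "\<dots> \<le> (\<Sum>i<n. s i)" unfolding Arr_FF[OF valid]
      by (intro sum_mono2) (auto simp: s0)
    finally show ?thesis .
  qed
  then have "cc * Dsz ?F \<le> cc * (\<Sum>i<n. s i)" using cc_pos by (intro mult_left_mono) auto
  finally show ?thesis .
qed

end

end

theorem theorem22:
  fixes \<alpha> :: real
  assumes "0 < \<alpha>" and "\<alpha> < 1/2"
  shows "\<exists>A :: algorithm. \<forall>n a s d. valid_instance n a s d \<longrightarrow>
           (\<forall>t. feasible_at A n a s d t) \<and>
           migrated_size A n a s d \<le> \<alpha> / (1 - 2 * \<alpha>) * (\<Sum>i<n. s i) \<and>
           (\<forall>t. real (open_bins A n a s d t) \<le> real (OPT n a s d t) / \<alpha> + 1)"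
proof -
  interpret alg \<alpha> by standard (use assms in auto)
  show ?thesis
  proof (intro exI[of _ algo] allI impI conjI)
    fix n a s d t assume v: "valid_instance n a s d"
    show "feasible_at algo n a s d t" by (rule feasible[OF v])
    show "real (open_bins algo n a s d t) \<le> real (OPT n a s d t) / \<alpha> + 1" by (rule bins[OF v])
  next
    fix n a s d assume v: "valid_instance n a s d"
    show "migrated_size algo n a s d \<le> \<alpha> / (1 - 2 * \<alpha>) * (\<Sum>i<n. s i)"
      using migrated[OF v] unfolding cc_def .
  qed
qed


end
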